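(* Let $d_2=1$ and assume Assumptions 1 and 2. Then $$\sum_{n=1}^N\big(\hat p(\hat x_n,\hat y_n)-p^*_{\theta_*}(\hat x_n,\hat y_n)\big)^2\ \le\ \frac{Nx_{\max}^2y_{\max}^2}{y_{\min}^2\,\lambda_{\min}(\mathbb E[xx^\top])}\,\mathbb E_{x,y}\big[(\hat p(x,y)-p^*_{\theta_*}(x,y))^2\big],$$ where $(x,y)$ is distributed as an online feature.
   Context: Online features $(x,y)\in\mathcal X\times\mathcal Y\subset\mathbb R^{d_1}\times\mathbb R$ (here $d_2=1$), unknown online parameter $\theta_*=(\alpha_*,\beta_* )\in\Theta^\dagger$. Offline features and prices $\{(\hat x_n,\hat y_n,\hat p_n)\}_{n=1}^N$ with $(\hat x_n,\hat y_n)\in\mathcal X\times\mathcal Y$. $p^*_\theta(x,y)=\arg\max_{p\ge0}p(\alpha^\top x+\beta yp)$. Assumption 1: $\Theta^\dagger$, $\mathcal X\times\mathcal Y$ compact with $\|\alpha\|\le\alpha_{\max},|\beta|\le\beta_{\max},\|x\|\le x_{\max},|y|\le y_{\max}$; $\mathbb E[xx^\top]$ and $\mathbb E[y^2]$ positive; positive constants with $l_\alpha\le\alpha^\top x\le u_\alpha$, $l_\beta\le-\beta y\le u_\beta$ for all $(\alpha,\beta)\in\Theta^\dagger,(x,y)\in\mathcal X\times\mathcal Y$; hence $p^*_\theta(x,y)=-\alpha^\top x/(2\beta y)$ and $|y|\ge y_{\min}>0$ on $\mathcal Y$. Assumption 2: $\hat\Sigma_{x,x}=\sum_n\hat x_n\hat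 x_n^\top$ satisfies $\lambda_{\min}(\hat\Sigma_{x,x})\ge cN$ for some $c>0$. Define $\hat A=\hat\Sigma_{x,x}^{-1}\sum_n\hat x_n\hat y_n\hat p_n\in\mathbb R^{d_1}$ and $\hat p(x,y)=\hat A^\top x/y$. *)

theory Defs
  imports "HOL-Analysis.Analysis" "HOL-Probability.Probability"
begin

definition pstar :: "((real^'d) \<times> real) \<Rightarrow> real^'d \<Rightarrow> real \<Rightarrow> real" where
  "pstar \<theta> x y = (ARG_MAX (\<lambda>p. p * (fst \<theta> \<bullet> x + snd \<theta> * y * p)) p. p \<ge> 0)"

definition lambda_min :: "real^'n^'n \<Rightarrow> real" where
  "lambda_min A = Min {e. \<exists>v. v \<noteq> 0 \<and> A *v v = e *\<^sub>R v}"

definition second_moment :: "((real^'d) \<times> real) measure \<Rightarrow> real^'d^'d" where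
  "second_moment M = (\<chi> i j. \<integral>z. (fst z $ i) * (fst z $ j) \<partial>M)"

definition Sigma_hat :: "nat \<Rightarrow> (nat \<Rightarrow> real^'d) \<Rightarrow> real^'d^'d" where
  "Sigma_hat N xh = (\<chi> i j. \<Sum>n=1..N. xh n $ i * xh n $ j)"

definition A_hat :: "nat \<Rightarrow> (nat \<Rightarrow> real^'d) \<Rightarrow> (nat \<Rightarrow> real) \<Rightarrow> (nat \<Rightarrow> real) \<Rightarrow> real^'d" where
  "A_hat N xh yh ph = matrix_inv (Sigma_hat N xh) *v (\<Sum>n=1..N. (yh n * ph n) *\<^sub>R xh n)"

definition p_hat :: "nat \<Rightarrow> (nat \<Rightarrow> real^'d) \<Rightarrow> (nat \<Rightarrow> real) \<Rightarrow> (nat \<Rightarrow> real) \<Rightarrow> real^'d \<Rightarrow> real \<Rightarrow> real" where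
  "p_hat N xh yh ph x y = (A_hat N xh yh ph \<bullet> x) / y"

end

theory Submission
  imports Defs
begin

lemma pstar_eq:
  fixes \<alpha> x :: "real^'d" and \<beta> y :: real
  assumes b: "\<beta> * y < 0" and a: "\<alpha> \<bullet> x \<ge> 0"
  shows "pstar (\<alpha>, \<beta>) x y = - (\<alpha> \<bullet> x) / (2 * \<beta> * y)"
proof -
  define A where "A = \<alpha> \<bullet> x"
  define B where "B = \<beta> * y"
  define p0 where "p0 = - A / (2 * B)"
  have B0: "B \<noteq> 0" using b B_def by auto
  have key: "p * (A + B * p) = p0 * (A + B * p0) + B * (p - p0)^2" for p
    unfolding p0_def using B0 by (simp add: field_simps power2_eq_square)
  have p0nn: "p0 \<ge> 0" unfolding p0_def using a b A_def B_def
    by (simp add: divide_nonneg_neg)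
  have f: "(\<lambda>p. p * (fst (\<alpha>, \<beta>) \<bullet> x + snd (\<alpha>, \<beta>) * y * p)) = (\<lambda>p. p * (A + B * p))"
    by (simp add: A_def B_def mult.assoc)
  have "(SOME p. is_arg_max (\<lambda>p. p * (A + B * p)) (\<lambda>p. p \<ge> 0) p) = p0"
  proof (rule some_equality)
    show "is_arg_max (\<lambda>p. p * (A + B * p)) (\<lambda>p. p \<ge> 0) p0"
    proof -
      have le: "p * (A + B * p) \<le> p0 * (A + B * p0)" for p
      proof -
        have "B \<le> 0" using b B_def by simp
        then have "B * (p - p0)^2 \<le> 0" by (rule mult_nonpos_nonneg) simp
        then show ?thesis using key[of p] by linarith
      qed
      show ?thesis unfolding is_arg_max_def using p0nn le by (auto simp: not_less)
    qed
  next
    fix p assume "is_arg_max (\<lambda>p. p * (A + B * p)) (\<lambda>p. p \<ge> 0) p"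
    then have "p * (A + B * p) \<ge> p0 * (A + B * p0)" using p0nn
      unfolding is_arg_max_def by (meson not_le)
    then have "B * (p - p0)^2 \<ge> 0" using key[of p] by simp
    moreover have "B < 0" using b B_def by simp
    ultimately have "(p - p0)^2 \<le> 0"
      by (simp add: mult_le_0_iff zero_le_mult_iff)
    then show "p = p0" by simp
  qed
  then show ?thesis unfolding pstar_def arg_max_def f p0_def A_def B_def by (simp add: mult.assoc)
qed

lemma sym_dot:
  fixes S :: "real^'n^'n"
  assumes "transpose S = S"
  shows "(S *v u) \<bullet> v = u \<bullet> (S *v v)"
  by (metis assms dot_lmul_matrix inner_commute transpose_matrix_vector)

lemma eig_finite:
  fixes S :: "real^'n^'n"
  assumes sym: "transpose S = S"
  shows "finite {e. \<exists>v. v \<noteq> 0 \<and> S *v v = e *\<^sub>R v}"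
proof -
  define E where "E = {e. \<exists>v. v \<noteq> 0 \<and> S *v v = e *\<^sub>R v}"
  define f where "f e = (SOME v. v \<noteq> 0 \<and> S *v v = e *\<^sub>R v)" for e
  have fe: "f e \<noteq> 0 \<and> S *v f e = e *\<^sub>R f e" if "e \<in> E" for e
    using that unfolding E_def f_def by (metis (mono_tags, lifting) mem_Collect_eq someI)
  have inj: "inj_on f E"
  proof (rule inj_onI)
    fix e1 e2 assume "e1 \<in> E" "e2 \<in> E" "f e1 = f e2"
    then have "e1 *\<^sub>R f e1 = e2 *\<^sub>R f e1" "f e1 \<noteq> 0" using fe by metis+
    then show "e1 = e2" by (simp add: scaleR_cancel_right)
  qed
  have "pairwise orthogonal (f ` E)"
  proof (rule pairwiseI)
    fix v1 v2 assume "v1 \<in> f ` E" "v2 \<in> f ` E" "v1 \<noteq> v2"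
    then obtain e1 e2 where e: "e1 \<in> E" "e2 \<in> E" "v1 = f e1" "v2 = f e2" by auto
    with \<open>v1 \<noteq> v2\<close> have "e1 \<noteq> e2" by auto
    have "e1 * (v1 \<bullet> v2) = (S *v v1) \<bullet> v2" using fe e by simp
    also have "\<dots> = v1 \<bullet> (S *v v2)" by (rule sym_dot[OF sym])
    also have "\<dots> = e2 * (v1 \<bullet> v2)" using fe e by simp
    finally have "v1 \<bullet> v2 = 0" using \<open>e1 \<noteq> e2\<close> by simp
    then show "orthogonal v1 v2" by (simp add: orthogonal_def)
  qed
  then have "finite (f ` E)" by (rule pairwise_orthogonal_imp_finite)
  then have "finite E" using inj finite_imageD by blast
  then show ?thesis unfolding E_def .
qed

lemma psd_null:
  fixes g :: "'a::real_inner \<Rightarrow> 'a"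
  assumes lin: "linear g" and sym: "\<And>u v. g u \<bullet> v = u \<bullet> g v"
    and psd: "\<And>v. v \<bullet> g v \<ge> 0" and z: "u \<bullet> g u = 0"
  shows "g u = 0"
proof -
  define h where "h = g u"
  define a where "a = h \<bullet> h"
  define b where "b = h \<bullet> g h"
  have b0: "b \<ge> 0" using psd b_def by simp
  have expand: "(u + t *\<^sub>R h) \<bullet> g (u + t *\<^sub>R h) = 2 * t * a + t^2 * b" for t
  proof -
    have "g (u + t *\<^sub>R h) = g u + t *\<^sub>R g h" using lin by (simp add: linear_add linear_scale)
    then have "(u + t *\<^sub>R h) \<bullet> g (u + t *\<^sub>R h) = u \<bullet> g u + t * (u \<bullet> g h) + t * (h \<bullet> g u) + t^2 * (h \<bullet> g h)"
      by (simp add: inner_add_left inner_add_right power2_eq_square algebra_simps)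
    also have "u \<bullet> g h = h \<bullet> g u" using sym[of h u] by (simp add: inner_commute)
    finally show ?thesis using z unfolding a_def b_def h_def by (simp add: algebra_simps)
  qed
  define t where "t = - a / (b + 1)"
  have "0 \<le> 2 * t * a + t^2 * b" using psd[of "u + t *\<^sub>R h"] expand by simp
  then have nn: "0 \<le> (b+1)^2 * (2 * t * a + t^2 * b)" by (rule mult_nonneg_nonneg[OF zero_le_power2])
  moreover have s: "t * (b + 1) = - a" unfolding t_def using b0 by simp
  have "(b+1)^2 * (2 * t * a + t^2 * b) = 2 * (t * (b+1)) * a * (b+1) + (t * (b+1))^2 * b"
    by (simp add: power2_eq_square algebra_simps)
  also have "\<dots> = a^2 * (- b - 2)" unfolding s by (simp add: power2_eq_square algebra_simps)
  finally have "a^2 * (- b - 2) \<ge> 0" using nn by simp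
  moreover have "a^2 * (- b - 2) \<le> 0" by (rule mult_nonneg_nonpos) (use b0 in auto)
  ultimately have "a^2 * (- b - 2) = 0" by linarith
  moreover have "- b - 2 \<noteq> 0" using b0 by linarith
  ultimately have "a^2 \<le> 0" by simp
  then have "a = 0" by simp
  then show ?thesis unfolding a_def h_def by simp
qed

lemma rayleigh:
  fixes S :: "real^'n^'n"
  assumes sym: "transpose S = S"
  shows "\<exists>m u. u \<noteq> 0 \<and> S *v u = m *\<^sub>R u \<and> (\<forall>v. m * (norm v)^2 \<le> v \<bullet> (S *v v))"
proof -
  define q where "q v = v \<bullet> (S *v v)" for v
  have cont: "continuous_on (sphere 0 1) q" unfolding q_def
    by (intro continuous_intros linear_continuous_on matrix_vector_mul_bounded_linear)
  have ne: "sphere (0::real^'n) 1 \<noteq> {}"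
    using norm_axis_1 by (metis mem_sphere_0 empty_iff)
  obtain u where u: "u \<in> sphere 0 1" and umin: "\<And>v. v \<in> sphere 0 1 \<Longrightarrow> q u \<le> q v"
    using continuous_attains_inf[OF compact_sphere ne cont] by blast
  define m where "m = q u"
  have nu: "norm u = 1" using u by simp
  have low: "m * (norm v)^2 \<le> q v" for v
  proof (cases "v = 0")
    case True then show ?thesis by (simp add: q_def)
  next
    case False
    define w where "w = (1 / norm v) *\<^sub>R v"
    have "w \<in> sphere 0 1" using False by (simp add: w_def)
    then have "m \<le> q w" using umin m_def by simp
    also have "q w = q v / (norm v)^2" unfolding q_def w_def
      by (simp add: matrix_vector_mult_scaleR power2_eq_square)
    finally show ?thesis using False by (simp add: field_simps)
  qed
  define g where "g v = S *v v - m *\<^sub>R v" for v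
  have lin: "linear g" unfolding linear_iff g_def
    by (simp add: matrix_vector_right_distrib matrix_vector_mult_scaleR scaleR_right_distrib scaleR_diff_right)
  have gsym: "g a \<bullet> b = a \<bullet> g b" for a b
    unfolding g_def using sym_dot[OF sym] by (simp add: inner_diff_left inner_diff_right)
  have psd: "v \<bullet> g v \<ge> 0" for v
    using low[of v] unfolding g_def q_def by (simp add: inner_diff_right power2_norm_eq_inner)
  have z: "u \<bullet> g u = 0"
    using nu unfolding g_def m_def q_def by (simp add: inner_diff_right power2_norm_eq_inner[symmetric])
  have "g u = 0" by (rule psd_null[OF lin gsym psd z])
  then have "S *v u = m *\<^sub>R u" unfolding g_def by simp
  moreover have "u \<noteq> 0" using nu by auto
  ultimately show ?thesis using low unfolding q_def by blast
qed

lemma lambda_min_props: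
  fixes S :: "real^'n^'n"
  assumes sym: "transpose S = S"
  shows "\<exists>v. v \<noteq> 0 \<and> S *v v = lambda_min S *\<^sub>R v"
    and "lambda_min S * (norm v)^2 \<le> v \<bullet> (S *v v)"
proof -
  define E where "E = {e. \<exists>v. v \<noteq> 0 \<and> S *v v = e *\<^sub>R v}"
  have fin: "finite E" unfolding E_def by (rule eig_finite[OF sym])
  obtain m u where mu: "u \<noteq> 0" "S *v u = m *\<^sub>R u" and low: "\<And>v. m * (norm v)^2 \<le> v \<bullet> (S *v v)"
    using rayleigh[OF sym] by blast
  have mE: "m \<in> E" unfolding E_def using mu by blast
  have lm: "lambda_min S = Min E" unfolding lambda_min_def E_def ..
  have "Min E \<in> E" using fin mE by (intro Min_in) auto
  then show "\<exists>v. v \<noteq> 0 \<and> S *v v = lambda_min S *\<^sub>R v" unfolding lm E_def by simp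
  have "Min E \<le> m" using fin mE by simp
  then have "lambda_min S * (norm v)^2 \<le> m * (norm v)^2" unfolding lm
    by (simp add: mult_right_mono)
  also have "\<dots> \<le> v \<bullet> (S *v v)" by (rule low)
  finally show "lambda_min S * (norm v)^2 \<le> v \<bullet> (S *v v)" .
qed

lemma integ_bound:
  fixes M :: "('a::topological_space) measure" and f :: "'a \<Rightarrow> real"
  assumes fm: "finite_measure M" and sM: "sets M = sets (restrict_space borel A)"
    and mf: "f \<in> borel_measurable borel" and bd: "\<And>z. z \<in> A \<Longrightarrow> \<bar>f z\<bar> \<le> bb"
  shows "integrable M f"
proof -
  have sp: "space M = A" using sets_eq_imp_space_eq[OF sM] by (simp add: space_restrict_space)
  have m: "f \<in> borel_measurable M"
    using measurable_restrict_space1[OF mf, of A] measurable_cong_sets[OF sM refl] by blast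
  show ?thesis
  proof (rule finite_measure.integrable_const_bound[OF fm _ m])
    show "AE z in M. norm (f z) \<le> bb" by (rule AE_I2) (use bd sp in auto)
  qed
qed

theorem lemmaD10:
  fixes \<Theta> :: "((real^'d) \<times> real) set" and X :: "(real^'d) set" and Y :: "real set"
    and \<alpha>s :: "real^'d" and \<beta>s :: real
    and M :: "((real^'d) \<times> real) measure"
    and N :: nat and xh :: "nat \<Rightarrow> real^'d" and yh ph :: "nat \<Rightarrow> real"
    and \<alpha>max \<beta>max xmax ymax ymin l\<alpha> u\<alpha> l\<beta> u\<beta> c :: real
  assumes theta_in: "(\<alpha>s, \<beta>s) \<in> \<Theta>"
    and comp_Theta: "compact \<Theta>" and comp_X: "compact X" and comp_Y: "compact Y"
    and bnd_Theta: "\<And>\<alpha> \<beta>. (\<alpha>, \<beta>) \<in> \<Theta> \<Longrightarrow> norm \<alpha> \<le> \<alpha>max \<and> \<bar>\<beta>\<bar> \<le> \<beta>max"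
    and bnd_X: "\<And>x. x \<in> X \<Longrightarrow> norm x \<le> xmax"
    and bnd_Y: "\<And>y. y \<in> Y \<Longrightarrow> \<bar>y\<bar> \<le> ymax"
    and prob: "prob_space M"
    and sets_M: "sets M = sets (restrict_space borel (X \<times> Y))"
    and Exx_pos: "\<And>v. v \<noteq> 0 \<Longrightarrow> v \<bullet> (second_moment M *v v) > 0"
    and Eyy_pos: "(\<integral>z. (snd z)\<^sup>2 \<partial>M) > 0"
    and consts_pos: "l\<alpha> > 0" "u\<alpha> > 0" "l\<beta> > 0" "u\<beta> > 0"
    and alpha_bnd: "\<And>\<alpha> \<beta> x y. (\<alpha>, \<beta>) \<in> \<Theta> \<Longrightarrow> x \<in> X \<Longrightarrow> y \<in> Y \<Longrightarrow>
                      l\<alpha> \<le> \<alpha> \<bullet> x \<and> \<alpha> \<bullet> x \<le> u\<alpha>"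
    and beta_bnd: "\<And>\<alpha> \<beta> x y. (\<alpha>, \<beta>) \<in> \<Theta> \<Longrightarrow> x \<in> X \<Longrightarrow> y \<in> Y \<Longrightarrow>
                      l\<beta> \<le> - \<beta> * y \<and> - \<beta> * y \<le> u\<beta>"
    and ymin_pos: "ymin > 0"
    and ymin_bnd: "\<And>y. y \<in> Y \<Longrightarrow> ymin \<le> \<bar>y\<bar>"
    and offline_in: "\<And>n. n \<in> {1..N} \<Longrightarrow> xh n \<in> X \<and> yh n \<in> Y"
    and c_pos: "c > 0"
    and assm2: "lambda_min (Sigma_hat N xh) \<ge> c * real N"
  shows "(\<Sum>n=1..N. (p_hat N xh yh ph (xh n) (yh n) - pstar (\<alpha>s, \<beta>s) (xh n) (yh n))\<^sup>2)
         \<le> real N * xmax\<^sup>2 * ymax\<^sup>2 / (ymin\<^sup>2 * lambda_min (second_moment M))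
            * (\<integral>z. (p_hat N xh yh ph (fst z) (snd z) - pstar (\<alpha>s, \<beta>s) (fst z) (snd z))\<^sup>2 \<partial>M)"
proof (cases "N = 0")
  case True then show ?thesis by simp
next
  case False
  then have "1 \<in> {1..N}" by simp
  then obtain x0 y0 where x0: "x0 \<in> X" and y0: "y0 \<in> Y" using offline_in by blast
  have by_neg: "\<beta>s * y < 0" if "y \<in> Y" for y
    using beta_bnd[OF theta_in x0 that] consts_pos by linarith
  have ax_nn: "\<alpha>s \<bullet> x \<ge> 0" if "x \<in> X" for x
    using alpha_bnd[OF theta_in that y0] consts_pos by linarith
  have b0: "\<beta>s \<noteq> 0" using by_neg[OF y0] by auto
  have y_ne: "y \<noteq> 0" if "y \<in> Y" for y using ymin_bnd[OF that] ymin_pos by auto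
  define w where "w = A_hat N xh yh ph + (1 / (2 * \<beta>s)) *\<^sub>R \<alpha>s"
  have diff: "p_hat N xh yh ph x y - pstar (\<alpha>s, \<beta>s) x y = (w \<bullet> x) / y" if "x \<in> X" "y \<in> Y" for x y
  proof -
    have ps: "pstar (\<alpha>s, \<beta>s) x y = - (\<alpha>s \<bullet> x) / (2 * \<beta>s * y)"
      by (rule pstar_eq[OF by_neg[OF that(2)] ax_nn[OF that(1)]])
    show ?thesis using b0 y_ne[OF that(2)]
      unfolding ps p_hat_def w_def by (simp add: inner_add_left field_simps)
  qed
  have wx: "(w \<bullet> x)^2 \<le> (norm w * xmax)^2" if "x \<in> X" for x
  proof -
    have "\<bar>w \<bullet> x\<bar> \<le> norm w * xmax"
      using Cauchy_Schwarz_ineq2[of w x] bnd_X[OF that]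
      by (meson mult_left_mono norm_ge_zero order_trans)
    then have "\<bar>w \<bullet> x\<bar>^2 \<le> (norm w * xmax)^2" by (rule power_mono) simp
    then show ?thesis by simp
  qed
  have y2: "ymin^2 \<le> y^2" "y^2 \<le> ymax^2" if "y \<in> Y" for y
  proof -
    have "ymin^2 \<le> \<bar>y\<bar>^2" using ymin_bnd[OF that] ymin_pos by (intro power_mono) auto
    then show "ymin^2 \<le> y^2" by simp
    have "\<bar>y\<bar>^2 \<le> ymax^2" using bnd_Y[OF that] by (intro power_mono) auto
    then show "y^2 \<le> ymax^2" by simp
  qed
  have ymax_pos: "ymax > 0" using ymin_bnd[OF y0] bnd_Y[OF y0] ymin_pos by linarith
  define K where "K = (norm w * xmax)^2 / ymin^2"
  have lhs: "(\<Sum>n=1..N. (p_hat N xh yh ph (xh n) (yh n) - pstar (\<alpha>s, \<beta>s) (xh n) (yh n))\<^sup>2) \<le> real N * K"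
  proof -
    have "(\<Sum>n=1..N. (p_hat N xh yh ph (xh n) (yh n) - pstar (\<alpha>s, \<beta>s) (xh n) (yh n))\<^sup>2)
        \<le> real (card {1..N}) * K"
    proof (rule sum_bounded_above)
      fix n assume n: "n \<in> {1..N}"
      then have xn: "xh n \<in> X" and yn: "yh n \<in> Y" using offline_in by auto
      have "(p_hat N xh yh ph (xh n) (yh n) - pstar (\<alpha>s, \<beta>s) (xh n) (yh n))\<^sup>2 = (w \<bullet> xh n)^2 / (yh n)^2"
        using diff[OF xn yn] by (simp add: power_divide)
      also have "\<dots> \<le> K" unfolding K_def
        by (rule frac_le) (use wx[OF xn] y2[OF yn] ymin_pos in auto)
      finally show "(p_hat N xh yh ph (xh n) (yh n) - pstar (\<alpha>s, \<beta>s) (xh n) (yh n))\<^sup>2 \<le> K" .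
    qed
    then show ?thesis by simp
  qed
  interpret P: prob_space M by (rule prob)
  have spM: "space M = X \<times> Y"
    using sets_eq_imp_space_eq[OF sets_M] by (simp add: space_restrict_space)
  have meas: "f \<in> borel_measurable M" if "f \<in> borel_measurable borel" for f :: "(real^'d) \<times> real \<Rightarrow> real"
    using measurable_restrict_space1[OF that, of "X \<times> Y"] measurable_cong_sets[OF sets_M refl] by blast
  have integ: "integrable M f" if "f \<in> borel_measurable borel" "\<And>z. z \<in> X \<times> Y \<Longrightarrow> \<bar>f z\<bar> \<le> bb"
    for f :: "(real^'d) \<times> real \<Rightarrow> real" and bb :: real
    by (rule integ_bound[OF P.finite_measure_axioms sets_M that])
  define S where "S = second_moment M"
  have symS: "transpose S = S"
    unfolding S_def second_moment_def transpose_def by (simp add: vec_eq_iff mult.commute)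
  define L where "L = lambda_min S"
  obtain v where v: "v \<noteq> 0" "S *v v = L *\<^sub>R v" using lambda_min_props(1)[OF symS] L_def by blast
  have "0 < v \<bullet> (S *v v)" using Exx_pos[OF v(1)] S_def by simp
  also have "\<dots> = L * (norm v)^2" using v(2) by (simp add: power2_norm_eq_inner)
  finally have L_pos: "L > 0" using v(1) by (simp add: zero_less_mult_iff)
  have Lw: "L * (norm w)^2 \<le> w \<bullet> (S *v w)" unfolding L_def by (rule lambda_min_props(2)[OF symS])
  have mij: "(\<lambda>z::(real^'d) \<times> real. fst z $ i * fst z $ j) \<in> borel_measurable borel" for i j :: 'd
    by (intro borel_measurable_continuous_onI continuous_on_mult continuous_on_component continuous_on_fst continuous_on_snd continuous_on_id continuous_on_power continuous_on_inner continuous_on_const)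
  have iij: "integrable M (\<lambda>z. fst z $ i * fst z $ j)" for i j :: 'd
  proof (rule integ_bound[OF P.finite_measure_axioms sets_M, where bb="xmax^2", OF mij])
    fix z :: "(real^'d) \<times> real" assume "z \<in> X \<times> Y"
    then have nz: "norm (fst z) \<le> xmax" using bnd_X by auto
    have "\<bar>fst z $ i\<bar> \<le> xmax" "\<bar>fst z $ j\<bar> \<le> xmax"
      using component_le_norm_cart[of "fst z"] nz by (meson order_trans)+
    then show "\<bar>fst z $ i * fst z $ j\<bar> \<le> xmax^2"
      by (simp add: abs_mult power2_eq_square mult_mono')
  qed
  have quad: "w \<bullet> (S *v w) = (\<integral>z. (w \<bullet> fst z)^2 \<partial>M)"
  proof -
    have pt: "(w \<bullet> x)^2 = (\<Sum>i\<in>UNIV. \<Sum>j\<in>UNIV. (w $ i * w $ j) * (x $ i * x $ j))" for x :: "real^'d"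
      by (simp add: inner_vec_def power2_eq_square sum_product algebra_simps)
    have "(\<integral>z. (w \<bullet> fst z)^2 \<partial>M) = (\<integral>z. (\<Sum>i\<in>UNIV. \<Sum>j\<in>UNIV. (w $ i * w $ j) * (fst z $ i * fst z $ j)) \<partial>M)"
      by (simp only: pt)
    also have "\<dots> = (\<Sum>i\<in>UNIV. \<Sum>j\<in>UNIV. (w $ i * w $ j) * (\<integral>z. fst z $ i * fst z $ j \<partial>M))"
      using iij by (simp add: Bochner_Integration.integral_sum integrable_sum)
    also have "\<dots> = w \<bullet> (S *v w)"
      unfolding S_def second_moment_def
      by (simp add: inner_vec_def matrix_vector_mult_def sum_distrib_left algebra_simps)
    finally show ?thesis by simp
  qed
  define F where "F z = (w \<bullet> fst z / snd z)^2" for z :: "(real^'d) \<times> real"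
  define G where "G z = (w \<bullet> fst z)^2 / ymax^2" for z :: "(real^'d) \<times> real"
  have Feq: "(\<integral>z. (p_hat N xh yh ph (fst z) (snd z) - pstar (\<alpha>s, \<beta>s) (fst z) (snd z))\<^sup>2 \<partial>M)
      = integral\<^sup>L M F"
    by (rule Bochner_Integration.integral_cong) (auto simp: spM F_def diff)
  have mF: "F \<in> borel_measurable borel" unfolding F_def
    by (intro borel_measurable_power borel_measurable_divide borel_measurable_continuous_onI continuous_on_mult continuous_on_component continuous_on_fst continuous_on_snd continuous_on_id continuous_on_power continuous_on_inner continuous_on_const)
  have mG: "(\<lambda>z. (w \<bullet> fst z)^2) \<in> borel_measurable borel"
    by (intro borel_measurable_continuous_onI continuous_on_mult continuous_on_component continuous_on_fst continuous_on_snd continuous_on_id continuous_on_power continuous_on_inner continuous_on_const)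
  have intF: "integrable M F"
  proof (rule integ_bound[OF P.finite_measure_axioms sets_M, where bb=K, OF mF])
    fix z :: "(real^'d) \<times> real" assume z: "z \<in> X \<times> Y"
    have "F z = (w \<bullet> fst z)^2 / (snd z)^2" by (simp add: F_def power_divide)
    also have "\<dots> \<le> K" unfolding K_def
      by (rule frac_le) (use wx y2 z ymin_pos in auto)
    finally show "\<bar>F z\<bar> \<le> K" unfolding F_def by simp
  qed
  have intG0: "integrable M (\<lambda>z. (w \<bullet> fst z)^2)"
    by (rule integ_bound[OF P.finite_measure_axioms sets_M, where bb="(norm w * xmax)^2", OF mG]) (use wx in auto)
  have intG: "integrable M G" unfolding G_def by (rule integrable_divide_zero) (rule intG0)
  have GF: "G z \<le> F z" if zM: "z \<in> space M" for z
  proof -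
    have zx: "snd z \<in> Y" using zM spM by (cases z) simp
    have "G z = (w \<bullet> fst z)^2 / ymax^2" by (simp add: G_def)
    also have "\<dots> \<le> (w \<bullet> fst z)^2 / (snd z)^2"
      by (rule frac_le) (use y2(2)[OF zx] y_ne[OF zx] in auto)
    also have "\<dots> = F z" by (simp add: F_def power_divide)
    finally show "G z \<le> F z" .
  qed
  have "integral\<^sup>L M G \<le> integral\<^sup>L M F"
    by (rule integral_mono[OF intG intF GF])
  moreover have "integral\<^sup>L M G = w \<bullet> (S *v w) / ymax^2"
    unfolding G_def quad by simp
  ultimately have IG: "w \<bullet> (S *v w) / ymax^2 \<le> integral\<^sup>L M F" by simp
  have "L * (norm w)^2 / ymax^2 \<le> w \<bullet> (S *v w) / ymax^2"
    by (rule divide_right_mono[OF Lw]) simp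
  with IG have IF: "L * (norm w)^2 / ymax^2 \<le> integral\<^sup>L M F" by (rule order_trans[rotated])
  define C where "C = real N * xmax\<^sup>2 * ymax\<^sup>2 / (ymin\<^sup>2 * L)"
  have C0: "C \<ge> 0" unfolding C_def using L_pos by simp
  have "C * (L * (norm w)^2 / ymax^2) = real N * xmax\<^sup>2 * (norm w)^2 / ymin\<^sup>2 * ((ymax^2 * L) / (ymax^2 * L))"
    unfolding C_def by (simp add: divide_simps)
  also have "\<dots> = real N * K" unfolding K_def using L_pos ymax_pos by (simp add: power_mult_distrib)
  finally have CK: "real N * K = C * (L * (norm w)^2 / ymax^2)" by simp
  have fin: "real N * K \<le> C * integral\<^sup>L M F"
    unfolding CK by (rule mult_left_mono[OF IF C0])
  have Ceq: "real N * xmax\<^sup>2 * ymax\<^sup>2 / (ymin\<^sup>2 * lambda_min (second_moment M)) = C"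
    by (simp only: C_def L_def S_def)
  show ?thesis unfolding Feq Ceq by (rule order_trans[OF lhs fin])
qed

end
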